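(* Let $\kappa$ be a cardinal with $\omega<\kappa<\mathfrak{c}$. Then there exists a Borel $\sigma$-ideal $I$ on $2^{\omega}$ (containing all singletons and not containing $2^\omega$) such that $\kappa$ is the maximal cardinal for which there is a family of $\kappa$ pairwise disjoint Borel subsets of $2^{\omega}$ none of which belongs to $I$. In particular, $I$ does not satisfy ccc, does not satisfy property (B), and satisfies the $\kappa^{+}$-chain condition (every family of pairwise disjoint Borel sets not in $I$ has size at most $\kappa$).
   Context: An ideal on a set $X$ is a family of subsets closed under finite unions and subsets; a $\sigma$-ideal is additionally closed under countable unions. An ideal $I$ on a Polish space $X$ is Borel if every $A\in I$ is contained in some Borel $B\in I$. $I$ satisfies ccc if every family of pairwise disjoint Borel sets not in $I$ is countable. Property (B) for $I$: there is a family of cardinality $\mathfrak{c}$ (the continuum) of pairwise disjoint Borel subsets of $X$ none of which belongs to $I$. *)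

theory Defs
  imports "HOL-Analysis.Analysis" "HOL-Library.Equipollence"
begin

text \<open>The Cantor space 2^omega is the type nat => bool with the product topology
 (bool carries the discrete = order topology).  Its Borel sets are sets borel.\<close>

type_synonym cantor = "nat \<Rightarrow> bool"

definition borel_sets_cantor :: "cantor set set" where
  "borel_sets_cantor = sets (borel :: cantor measure)"

definition is_ideal :: "'a set set \<Rightarrow> bool" where
  "is_ideal I \<longleftrightarrow> {} \<in> I \<and> (\<forall>A\<in>I. \<forall>B\<in>I. A \<union> B \<in> I) \<and> (\<forall>A\<in>I. \<forall>B. B \<subseteq> A \<longrightarrow> B \<in> I)"

definition is_sigma_ideal :: "'a set set \<Rightarrow> bool" where
  "is_sigma_ideal I \<longleftrightarrow> is_ideal I \<and> (\<forall>A::nat \<Rightarrow> 'a set. range A \<subseteq> I \<longrightarrow> (\<Union>n. A n) \<in> I)"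

definition borel_ideal_cantor :: "cantor set set \<Rightarrow> bool" where
  "borel_ideal_cantor I \<longleftrightarrow> (\<forall>A\<in>I. \<exists>B\<in>borel_sets_cantor. A \<subseteq> B \<and> B \<in> I)"

definition disjoint_positive_family :: "cantor set set \<Rightarrow> cantor set set \<Rightarrow> bool" where
  "disjoint_positive_family I F \<longleftrightarrow> F \<subseteq> borel_sets_cantor \<and> disjoint F \<and> (\<forall>A\<in>F. A \<notin> I)"

end

theory Submission imports Defs "HOL-Probability.Probability" begin

instance bool :: second_countable_topology
proof
  show "\<exists>B::bool set set. countable B \<and> open = generate_topology B"
  proof (intro exI[of _ UNIV] conjI ext)
    fix S :: "bool set"
    show "open S = generate_topology UNIV S"
      using Topological_Spaces.open_discrete[of S] generate_topology.Basis[of S UNIV] by simp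
  qed simp
qed

definition CM :: "cantor measure" where
  "CM = PiM UNIV (\<lambda>_::nat. measure_pmf (bernoulli_pmf (1/2)))"

lemma sets_bool_borel: "sets (borel :: bool measure) = UNIV"
  using borel_open[OF Topological_Spaces.open_discrete] by blast

lemma sets_CM: "sets CM = sets (borel :: cantor measure)"
proof -
  have "sets CM = sets (PiM UNIV (\<lambda>_::nat. (borel :: bool measure)))"
    unfolding CM_def by (rule sets_PiM_cong) (auto simp: sets_bool_borel)
  also have "\<dots> = sets borel" by (rule sets_PiM_equal_borel)
  finally show ?thesis .
qed

lemma space_CM: "space CM = UNIV"
  unfolding CM_def by (simp add: space_PiM)

lemma prob_CM: "prob_space CM"
  unfolding CM_def by (intro prob_space_PiM prob_space_measure_pmf)

lemma fin_CM: "finite_measure CM"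
  using prob_CM unfolding prob_space_def by blast

definition il :: "cantor \<Rightarrow> cantor \<Rightarrow> cantor" where
  "il y z = (\<lambda>n. if even n then z (n div 2) else y (n div 2))"

lemma il_meas: "il y \<in> borel_measurable borel"
  unfolding il_def
  by (rule measurable_coordinatewise_then_product) simp

lemma il_meas_CM: "B \<in> sets borel \<Longrightarrow> il y -` B \<in> sets CM"
  using measurable_sets[OF il_meas, of B y] by (simp add: sets_CM)

lemma il_odd: "il y z (Suc (2*n)) = y n"
  unfolding il_def by simp

lemma il_even: "il y z (2*n) = z n"
  unfolding il_def by simp

lemma coord_set: "{x::cantor. x i = b} \<in> sets borel"
proof -
  have "(\<lambda>x::cantor. x i) -` {b} \<inter> space borel \<in> sets borel"
    by (rule measurable_sets[OF measurable_product_coordinates]) (simp add: sets_bool_borel)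
  moreover have "(\<lambda>x::cantor. x i) -` {b} \<inter> space borel = {x. x i = b}" by auto
  ultimately show ?thesis by simp
qed

lemma range_il: "range (il y) = (\<Inter>n. {x. x (Suc (2*n)) = y n})"
proof (intro equalityI subsetI)
  fix x assume x: "x \<in> (\<Inter>n. {x. x (Suc (2*n)) = y n})"
  have "il y (\<lambda>n. x (2*n)) k = x k" for k
  proof (cases "even k")
    case True then obtain m where "k = 2*m" by blast
    thus ?thesis by (simp add: il_even)
  next
    case False then obtain m where "k = 2*m+1" by (rule oddE)
    with x show ?thesis by (simp add: il_odd)
  qed
  hence "x = il y (\<lambda>n. x (2*n))" by (simp add: fun_eq_iff)
  thus "x \<in> range (il y)" by blast
qed (auto simp: il_odd)

lemma range_il_borel: "range (il y) \<in> sets borel"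
  unfolding range_il by (rule sets.countable_INT') (auto intro: coord_set)

lemma CM_single_le: "measure CM {x} \<le> (1/2)^n"
proof -
  let ?B = "measure_pmf (bernoulli_pmf (1/2))"
  let ?E = "prod_emb UNIV (\<lambda>_. ?B) {..<n} (PiE {..<n} (\<lambda>i. {x i}))"
  have sub: "{x} \<subseteq> ?E"
    by (auto simp: prod_emb_def space_PiM)
  have E: "emeasure CM ?E = (\<Prod>i\<in>{..<n}. emeasure ?B {x i})"
    unfolding CM_def by (rule emeasure_PiM_emb) (auto intro: prob_space_measure_pmf)
  have b: "emeasure ?B {b} = ennreal (1/2)" for b
    by (cases b) (auto simp: emeasure_pmf_single)
  have Es: "?E \<in> sets CM"
    unfolding CM_def by (rule sets_PiM_I) auto
  have "emeasure CM {x} \<le> emeasure CM ?E"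
    by (rule emeasure_mono[OF sub Es])
  also have "\<dots> = ennreal ((1/2)^n)"
    unfolding E b by (simp only: prod_constant card_lessThan) (rule ennreal_power, simp)
  finally have "emeasure CM {x} \<le> ennreal ((1/2)^n)" .
  moreover have "emeasure CM {x} = ennreal (measure CM {x})"
    using finite_measure.emeasure_eq_measure[OF fin_CM] by blast
  ultimately show ?thesis by simp
qed

lemma single_set: "{x::cantor} \<in> sets borel"
proof -
  have "{x} = (\<Inter>i. {y::cantor. y i = x i})" by auto
  thus ?thesis using sets.countable_INT'[of UNIV "\<lambda>i. {y::cantor. y i = x i}"] coord_set by auto
qed

lemma CM_single_null: "{x} \<in> null_sets CM"
proof -
  have m0: "measure CM {x} = 0"
  proof (rule ccontr)
    assume "measure CM {x} \<noteq> 0"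
    hence "measure CM {x} > 0" by (simp add: less_le)
    then obtain n where "(1/2::real)^n < measure CM {x}"
      using real_arch_pow_inv[of "measure CM {x}" "1/2"] by auto
    with CM_single_le[of x n] show False by simp
  qed
  have "{x} \<in> sets CM" using single_set sets_CM by simp
  moreover have "emeasure CM {x} = 0"
    using finite_measure.emeasure_eq_measure[OF fin_CM] m0 by simp
  ultimately show ?thesis by (simp add: null_sets_def)
qed

lemma il_single: "il y -` {x} \<subseteq> {\<lambda>n. x (2*n)}"
proof
  fix z assume "z \<in> il y -` {x}"
  hence "il y z = x" by simp
  hence "z n = x (2*n)" for n using il_even[of y z n] by simp
  thus "z \<in> {\<lambda>n. x (2*n)}" by (simp add: fun_eq_iff)
qed

lemma il_single_null: "il y -` {x} \<in> null_sets CM"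
  by (rule null_sets_subset[OF CM_single_null il_meas_CM[OF single_set] il_single])

lemma countable_pos_disjoint:
  assumes fm: "finite_measure M" and G: "G \<subseteq> sets M" and dj: "disjoint G"
  shows "countable {A\<in>G. measure M A \<noteq> 0}"
proof -
  interpret finite_measure M by (rule fm)
  let ?S = "measure M (space M)"
  show ?thesis
  proof (cases "?S = 0")
    case True
    have "measure M A = 0" if "A \<in> sets M" for A
      using bounded_measure[of A] True measure_nonneg[of M A] by simp
    hence e: "{A\<in>G. measure M A \<noteq> 0} = {}" using G by auto
    show ?thesis unfolding e by simp
  next
    case False
    hence Spos: "?S > 0" using measure_nonneg[of M "space M"] by linarith
    have eq: "{A\<in>G. measure M A \<noteq> 0} \<subseteq> (\<Union>n. {A\<in>G. ?S / Suc n < measure M A})"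
    proof
      fix A assume A: "A \<in> {A\<in>G. measure M A \<noteq> 0}"
      hence mpos: "measure M A > 0" using measure_nonneg[of M A] by (simp add: less_le)
      obtain n where n: "?S / measure M A < real n" using reals_Archimedean2 by blast
      have "?S < real n * measure M A"
        using n mpos by (simp add: divide_less_eq)
      also have "\<dots> \<le> real (Suc n) * measure M A"
        using mpos by (intro mult_right_mono) auto
      finally have "?S < measure M A * real (Suc n)" by (simp add: mult.commute)
      hence "?S / Suc n < measure M A" by (simp add: divide_less_eq)
      thus "A \<in> (\<Union>n. {A\<in>G. ?S / Suc n < measure M A})" using A by blast
    qed
    have fin: "finite {A\<in>G. ?S / Suc n < measure M A}" for n
    proof (rule ccontr)
      assume "infinite {A\<in>G. ?S / Suc n < measure M A}"
      then obtain X where X: "finite X" "card X = Suc (Suc n)" "X \<subseteq> {A\<in>G. ?S / Suc n < measure M A}"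
        using infinite_arbitrarily_large by blast
      have XM: "X \<subseteq> sets M" using X G by auto
      have djX: "disjoint_family_on (\<lambda>A. A) X"
        unfolding disjoint_family_on_def
      proof (intro ballI impI)
        fix a b assume "a \<in> X" "b \<in> X" "a \<noteq> b"
        thus "a \<inter> b = {}" using dj X(3) unfolding disjoint_def pairwise_def disjnt_def by blast
      qed
      have "?S * real (Suc n) < real (Suc (Suc n)) * ?S" using Spos by simp
      hence "?S < real (Suc (Suc n)) * ?S / real (Suc n)" by (simp add: less_divide_eq)
      also have "\<dots> = (\<Sum>A\<in>X. ?S / Suc n)" using X(2) by simp
      finally have "?S < (\<Sum>A\<in>X. ?S / Suc n)" .
      also have "\<dots> \<le> (\<Sum>A\<in>X. measure M A)"
        using X(3) by (intro sum_mono) auto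
      also have "\<dots> = measure M (\<Union>A\<in>X. A)"
        using finite_measure_finite_Union[of X "\<lambda>A. A"] X(1) XM djX by simp
      also have "\<dots> \<le> ?S"
        using XM by (intro bounded_measure) 
      finally show False by simp
    qed
    show ?thesis
      by (rule countable_subset[OF eq], rule countable_UN[OF countableI_type], rule countable_finite, rule fin)
  qed
qed

lemma real_to_cantor: "\<exists>h::real \<Rightarrow> cantor. inj h"
proof (intro exI injI)
  fix r s :: real
  assume eq: "(\<lambda>n. of_rat (from_nat n :: rat) < r) = (\<lambda>n. of_rat (from_nat n) < s)"
  show "r = s"
  proof (rule ccontr)
    assume "r \<noteq> s"
    then consider "r < s" | "s < r" by linarith
    thus False
    proof cases
      case 1
      then obtain q where q: "r < of_rat q" "of_rat q < s" using of_rat_dense by blast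
      have "(of_rat (from_nat (to_nat q) :: rat) < r) = (of_rat (from_nat (to_nat q) :: rat) < s)"
        using eq by metis
      with q show False by simp
    next
      case 2
      then obtain q where q: "s < of_rat q" "of_rat q < r" using of_rat_dense by blast
      have "(of_rat (from_nat (to_nat q) :: rat) < r) = (of_rat (from_nat (to_nat q) :: rat) < s)"
        using eq by metis
      with q show False by simp
    qed
  qed
qed

lemma times_nat_lepoll:
  assumes "infinite K"
  shows "K \<times> (UNIV :: nat set) \<lesssim> K"
proof -
  have "(UNIV :: nat set) \<lesssim> K" using assms infinite_le_lepoll by blast
  hence "K \<times> (UNIV :: nat set) \<lesssim> K \<times> K" by (intro times_lepoll_mono lepoll_refl)
  moreover have "K \<times> K \<approx> K"
    using card_of_Times_same_infinite[OF assms] eqpoll_iff_card_of_ordIso by blast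
  ultimately show ?thesis by (rule lepoll_trans2)
qed

lemma UNIV_not_null: "UNIV \<notin> null_sets CM"
proof
  assume "UNIV \<in> null_sets CM"
  hence "emeasure CM (space CM) = 0" by (simp add: space_CM null_sets_def)
  thus False using prob_space.emeasure_space_1[OF prob_CM] by simp
qed

lemma range_il_inj: "range (il y) \<inter> range (il y') \<noteq> {} \<Longrightarrow> y = y'"
proof -
  assume "range (il y) \<inter> range (il y') \<noteq> {}"
  then obtain z z' where "il y z = il y' z'" by blast
  hence "il y z (Suc (2*n)) = il y' z' (Suc (2*n))" for n by simp
  thus "y = y'" by (simp add: il_odd fun_eq_iff)
qed

lemma djD: "disjoint F \<Longrightarrow> A \<in> F \<Longrightarrow> B \<in> F \<Longrightarrow> A \<noteq> B \<Longrightarrow> A \<inter> B = {}"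
  unfolding disjoint_def pairwise_def disjnt_def by blast

theorem theorem1p1:
  fixes K :: "'k set"
  assumes "uncountable K"
    and "K \<prec> (UNIV :: real set)"
  shows "\<exists>I :: cantor set set.
           is_sigma_ideal I \<and> borel_ideal_cantor I \<and>
           (\<forall>x. {x} \<in> I) \<and> UNIV \<notin> I \<and>
           (\<exists>F. disjoint_positive_family I F \<and> F \<approx> K) \<and>
           (\<forall>F. disjoint_positive_family I F \<longrightarrow> F \<lesssim> K)"
proof -
  have infK: "infinite K" using assms(1) countable_finite by blast
  have Kne: "K \<noteq> {}" using assms(1) by auto
  obtain f :: "'k \<Rightarrow> real" where f: "inj_on f K" using assms(2) unfolding lesspoll_def lepoll_def by blast
  obtain h :: "real \<Rightarrow> cantor" where h: "inj h" using real_to_cantor by blast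
  define e where "e = h \<circ> f"
  have e: "inj_on e K" unfolding e_def using f h by (simp add: comp_inj_on inj_on_subset)
  define N where "N B \<longleftrightarrow> B \<in> sets borel \<and> (\<forall>k\<in>K. il (e k) -` B \<in> null_sets CM)" for B
  define I where "I = {A. \<exists>B. N B \<and> A \<subseteq> B}"
  have NI: "N B \<Longrightarrow> B \<in> I" for B unfolding I_def by blast
  have ideal: "is_ideal I"
    unfolding is_ideal_def
  proof (intro conjI ballI allI impI)
    show "{} \<in> I" by (rule NI) (simp add: N_def)
  next
    fix A B assume "A \<in> I" "B \<in> I"
    then obtain A' B' where "N A'" "A \<subseteq> A'" "N B'" "B \<subseteq> B'" unfolding I_def by blast
    moreover have "N (A' \<union> B')"
      using \<open>N A'\<close> \<open>N B'\<close> unfolding N_def by (auto simp: vimage_Un intro: null_sets.Un)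
    ultimately show "A \<union> B \<in> I" unfolding I_def by blast
  next
    fix A B assume "A \<in> I" "B \<subseteq> A"
    thus "B \<in> I" unfolding I_def by blast
  qed
  have sigma: "is_sigma_ideal I"
    unfolding is_sigma_ideal_def
  proof (intro conjI allI impI ideal)
    fix A :: "nat \<Rightarrow> cantor set" assume "range A \<subseteq> I"
    hence "\<forall>n. \<exists>B. N B \<and> A n \<subseteq> B" unfolding I_def by blast
    then obtain B where B: "\<forall>n. N (B n) \<and> A n \<subseteq> B n" by metis
    have "N (\<Union>n. B n)"
      unfolding N_def
    proof (intro conjI ballI)
      show "(\<Union>n. B n) \<in> sets borel" using B unfolding N_def by auto
    next
      fix k assume "k \<in> K"
      hence "\<forall>n. il (e k) -` B n \<in> null_sets CM" using B unfolding N_def by auto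
      hence "(\<Union>n. il (e k) -` B n) \<in> null_sets CM" by (intro null_sets_UN) auto
      thus "il (e k) -` (\<Union>n. B n) \<in> null_sets CM" by (simp add: vimage_Union)
    qed
    thus "(\<Union>n. A n) \<in> I" using B unfolding I_def by blast
  qed
  have bor: "borel_ideal_cantor I"
    unfolding borel_ideal_cantor_def borel_sets_cantor_def I_def
    using NI unfolding I_def N_def by blast
  have sing: "\<forall>x. {x} \<in> I"
    using NI single_set il_single_null unfolding N_def by blast
  have notI: "A \<notin> I" if "k \<in> K" "range (il (e k)) \<subseteq> A" for A k
  proof
    assume "A \<in> I"
    then obtain B where "N B" "A \<subseteq> B" unfolding I_def by blast
    hence "il (e k) -` B \<in> null_sets CM" using that unfolding N_def by blast
    moreover have "il (e k) -` B = UNIV" using that \<open>A \<subseteq> B\<close> by auto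
    ultimately show False using UNIV_not_null by simp
  qed
  have univ: "UNIV \<notin> I" using notI Kne by blast
  define F0 where "F0 = (\<lambda>k. range (il (e k))) ` K"
  have inj0: "inj_on (\<lambda>k. range (il (e k))) K"
  proof (rule inj_onI)
    fix k k' assume "k \<in> K" "k' \<in> K" "range (il (e k)) = range (il (e k'))"
    hence "range (il (e k)) \<inter> range (il (e k')) \<noteq> {}" by auto
    hence "e k = e k'" by (rule range_il_inj)
    thus "k = k'" using e \<open>k \<in> K\<close> \<open>k' \<in> K\<close> by (simp add: inj_on_def)
  qed
  have F0: "disjoint_positive_family I F0 \<and> F0 \<approx> K"
  proof (intro conjI)
    show "F0 \<approx> K"
      unfolding F0_def using inj0 by (metis bij_betw_imageI eqpoll_def eqpoll_sym)
    show "disjoint_positive_family I F0"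
      unfolding disjoint_positive_family_def
    proof (intro conjI ballI)
      show "F0 \<subseteq> borel_sets_cantor"
        unfolding F0_def borel_sets_cantor_def using range_il_borel by blast
      show "disjoint F0"
        unfolding disjoint_def pairwise_def disjnt_def
      proof (intro ballI impI)
        fix a b assume "a \<in> F0" "b \<in> F0" "a \<noteq> b"
        then obtain k k' where ab: "a = range (il (e k))" "b = range (il (e k'))"
          unfolding F0_def by blast
        show "a \<inter> b = {}"
        proof (rule ccontr)
          assume "a \<inter> b \<noteq> {}"
          hence "e k = e k'" unfolding ab by (rule range_il_inj)
          thus False using \<open>a \<noteq> b\<close> ab by simp
        qed
      qed
      fix A assume "A \<in> F0"
      thus "A \<notin> I" unfolding F0_def using notI by blast
    qed
  qed
  have upper: "F \<lesssim> K" if F: "disjoint_positive_family I F" for F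
  proof -
    have FB: "F \<subseteq> sets borel" and djF: "disjoint F" and FI: "\<forall>A\<in>F. A \<notin> I"
      using F unfolding disjoint_positive_family_def borel_sets_cantor_def by auto
    define G where "G k = {A\<in>F. il (e k) -` A \<notin> null_sets CM}" for k
    have exk: "\<exists>k\<in>K. A \<in> G k" if "A \<in> F" for A
    proof (rule ccontr)
      assume "\<not> ?thesis"
      hence "N A" using that FB unfolding N_def G_def by auto
      thus False using NI FI that by blast
    qed
    have cG: "countable (G k)" for k
    proof -
      let ?p = "\<lambda>A. il (e k) -` A"
      define P where "P = ?p ` F"
      have PM: "P \<subseteq> sets CM" unfolding P_def using FB il_meas_CM by blast
      have djP: "disjoint P"
        unfolding disjoint_def pairwise_def disjnt_def
      proof (intro ballI impI)
        fix C C' assume "C \<in> P" "C' \<in> P" "C \<noteq> C'"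
        then obtain A A' where AA: "A \<in> F" "A' \<in> F" "C = ?p A" "C' = ?p A'"
          unfolding P_def by blast
        hence "A \<noteq> A'" using \<open>C \<noteq> C'\<close> by blast
        hence "A \<inter> A' = {}" using djD[OF djF AA(1,2)] by blast
        thus "C \<inter> C' = {}" using \<open>C = ?p A\<close> \<open>C' = ?p A'\<close> by auto
      qed
      have c: "countable {C\<in>P. measure CM C \<noteq> 0}"
        by (rule countable_pos_disjoint[OF fin_CM PM djP])
      have sub: "?p ` G k \<subseteq> {C\<in>P. measure CM C \<noteq> 0}"
      proof
        fix C assume "C \<in> ?p ` G k"
        then obtain A where A: "A \<in> G k" "C = ?p A" by blast
        have "C \<in> sets CM" using A FB il_meas_CM unfolding G_def by blast
        moreover have "C \<notin> null_sets CM" using A unfolding G_def by simp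
        ultimately have "emeasure CM C \<noteq> 0" by (simp add: null_sets_def)
        hence "measure CM C \<noteq> 0"
          using finite_measure.emeasure_eq_measure[OF fin_CM] by simp
        moreover have "C \<in> P" using A unfolding P_def G_def by blast
        ultimately show "C \<in> {C\<in>P. measure CM C \<noteq> 0}" by simp
      qed
      have inj: "inj_on ?p (G k)"
      proof (rule inj_onI, rule ccontr)
        fix A A' assume A: "A \<in> G k" "A' \<in> G k" "?p A = ?p A'" "A \<noteq> A'"
        hence "A \<inter> A' = {}" using djD[OF djF] unfolding G_def by blast
        hence "?p A = {}" using A(3) by auto
        thus False using A(1) unfolding G_def by simp
      qed
      show ?thesis
        by (rule countable_image_inj_on[OF countable_subset[OF sub c] inj])
    qed
    define kk where "kk A = (SOME k. k \<in> K \<and> A \<in> G k)" for A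
    have kk: "kk A \<in> K \<and> A \<in> G (kk A)" if "A \<in> F" for A
      unfolding kk_def using exk[OF that] by (metis (mono_tags, lifting) someI_ex)
    define phi where "phi A = (kk A, to_nat_on (G (kk A)) A)" for A
    have "inj_on phi F"
    proof (rule inj_onI)
      fix A A' assume A: "A \<in> F" "A' \<in> F" "phi A = phi A'"
      hence k: "kk A = kk A'" and t: "to_nat_on (G (kk A)) A = to_nat_on (G (kk A)) A'"
        unfolding phi_def by auto
      show "A = A'"
        using inj_on_to_nat_on[OF cG[of "kk A"]] kk[OF A(1)] kk[OF A(2)] k t
        unfolding inj_on_def by metis
    qed
    moreover have "phi ` F \<subseteq> K \<times> (UNIV :: nat set)" unfolding phi_def using kk by auto
    ultimately have "F \<lesssim> K \<times> (UNIV :: nat set)" unfolding lepoll_def by blast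
    thus ?thesis using times_nat_lepoll[OF infK] by (rule lepoll_trans)
  qed
  show ?thesis
    using sigma bor sing univ F0 upper by blast
qed

end
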